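(* Let $n$ be a positive integer and suppose there exist two mutually orthogonal latin squares of order $n$ that have a common transversal. Let $\rho$ be an integer with $1 \le \rho \le n$. Then there exists a $(3n+\rho,4)$-packing with exactly $n\rho + D(\rho,4)$ blocks in which the largest partial parallel class has size $\rho$.
   Context: For integers $v \ge k \ge 2$, a $(v,k)$-packing is a pair $(X,\mathcal{B})$ where $X$ is a set of $v$ points and $\mathcal{B}$ is a set of $k$-subsets of $X$ (blocks) such that every pair of distinct points lies in at most one block. For integers $m \ge 0$, $D(m,k)$ denotes the maximum number of $k$-subsets of an $m$-set such that every pair of points lies in at most one of them (so $D(m,k)=0$ if $m<k$). A partial parallel class (PPC) is a set of pairwise disjoint blocks; its size is the number of blocks. "The largest PPC has size $\rho$" means the packing has a PPC of size $\rho$ but none of size $\rho+1$. A transversal of a latin square of order $n$ is a set of $n$ cells, one in each row and each column, containing $n$ distinct symbols; a common transversal of several latin squares is a set of cells that is a transversal of each of them. *)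

theory Defs
  imports Main
begin

definition latin_square :: "nat \<Rightarrow> (nat \<Rightarrow> nat \<Rightarrow> nat) \<Rightarrow> bool" where
  "latin_square n L \<longleftrightarrow>
     (\<forall>i<n. \<forall>j<n. L i j < n) \<and>
     (\<forall>i<n. inj_on (\<lambda>j. L i j) {0..<n}) \<and>
     (\<forall>j<n. inj_on (\<lambda>i. L i j) {0..<n})"

definition orthogonal_ls :: "nat \<Rightarrow> (nat \<Rightarrow> nat \<Rightarrow> nat) \<Rightarrow> (nat \<Rightarrow> nat \<Rightarrow> nat) \<Rightarrow> bool" where
  "orthogonal_ls n L1 L2 \<longleftrightarrow>
     inj_on (\<lambda>(i, j). (L1 i j, L2 i j)) ({0..<n} \<times> {0..<n})"

definition MOLS2 :: "nat \<Rightarrow> (nat \<Rightarrow> nat \<Rightarrow> nat) \<Rightarrow> (nat \<Rightarrow> nat \<Rightarrow> nat) \<Rightarrow> bool" where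
  "MOLS2 n L1 L2 \<longleftrightarrow> latin_square n L1 \<and> latin_square n L2 \<and> orthogonal_ls n L1 L2"

definition transversal :: "nat \<Rightarrow> (nat \<Rightarrow> nat \<Rightarrow> nat) \<Rightarrow> (nat \<times> nat) set \<Rightarrow> bool" where
  "transversal n L T \<longleftrightarrow>
     T \<subseteq> {0..<n} \<times> {0..<n} \<and> card T = n \<and>
     (\<forall>i<n. \<exists>!j. (i, j) \<in> T) \<and>
     (\<forall>j<n. \<exists>!i. (i, j) \<in> T) \<and>
     card ((\<lambda>(i, j). L i j) ` T) = n"

definition packing :: "'a set \<Rightarrow> nat \<Rightarrow> 'a set set \<Rightarrow> bool" where
  "packing X k B \<longleftrightarrow> finite X \<and>
     (\<forall>b\<in>B. b \<subseteq> X \<and> card b = k) \<and>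
     (\<forall>x y. x \<noteq> y \<longrightarrow> card {b \<in> B. x \<in> b \<and> y \<in> b} \<le> 1)"

definition D :: "nat \<Rightarrow> nat \<Rightarrow> nat" where
  "D m k = Max {card B | B. packing ({0..<m} :: nat set) k B}"

definition PPC :: "'a set set \<Rightarrow> 'a set set \<Rightarrow> bool" where
  "PPC B P \<longleftrightarrow> P \<subseteq> B \<and> (\<forall>b\<in>P. \<forall>c\<in>P. b \<noteq> c \<longrightarrow> b \<inter> c = {})"

definition largest_PPC_size :: "'a set set \<Rightarrow> nat \<Rightarrow> bool" where
  "largest_PPC_size B r \<longleftrightarrow>
     (\<exists>P. PPC B P \<and> card P = r) \<and> \<not> (\<exists>P. PPC B P \<and> card P = r + 1)"

end

theory Submission
  imports Defs
begin

lemma D_attained: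
  obtains B0 where "packing ({0..<m}::nat set) k B0" "card B0 = D m k"
proof -
  let ?S = "{card B | B. packing ({0..<m} :: nat set) k B}"
  have sub: "?S \<subseteq> {..2^m}"
  proof
    fix c assume "c \<in> ?S"
    then obtain B where B: "packing ({0..<m}::nat set) k B" "c = card B" by blast
    have "B \<subseteq> Pow {0..<m}" using B(1) unfolding packing_def by auto
    hence "card B \<le> card (Pow ({0..<m}::nat set))" by (intro card_mono) auto
    thus "c \<in> {..2^m}" using B(2) by (simp add: card_Pow)
  qed
  have fin: "finite ?S" using sub finite_subset by blast
  have "packing ({0..<m}::nat set) k {}" unfolding packing_def by simp
  hence ne: "?S \<noteq> {}" by blast
  have "D m k \<in> ?S" unfolding D_def using Max_in[OF fin ne] .
  then obtain B where "packing ({0..<m}::nat set) k B" "D m k = card B" by blast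
  thus ?thesis using that by simp
qed

lemma cls:
  fixes x p n r i a b r' i' a' b' :: nat
  assumes "(x < p \<and> x = r) \<or> (p \<le> x \<and> x < p + n \<and> x = p + i) \<or>
      (p + n \<le> x \<and> x < p + 2*n \<and> x = p + n + a) \<or> (p + 2*n \<le> x \<and> x = p + 2*n + b)"
  and "(x < p \<and> x = r') \<or> (p \<le> x \<and> x < p + n \<and> x = p + i') \<or>
      (p + n \<le> x \<and> x < p + 2*n \<and> x = p + n + a') \<or> (p + 2*n \<le> x \<and> x = p + 2*n + b')"
  shows "(x = r \<and> r = r') \<or> (x = p + i \<and> i = i') \<or>
      (x = p + n + a \<and> a = a') \<or> (x = p + 2*n + b \<and> b = b')"
  using assms by auto

lemma pair:
  fixes x y p n r i a b r' i' a' b' :: nat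
  assumes "(x = r \<and> r = r') \<or> (x = p + i \<and> i = i') \<or>
      (x = p + n + a \<and> a = a') \<or> (x = p + 2*n + b \<and> b = b')"
  and "(y = r \<and> r = r') \<or> (y = p + i \<and> i = i') \<or>
      (y = p + n + a \<and> a = a') \<or> (y = p + 2*n + b \<and> b = b')"
  and "x \<noteq> y"
  shows "(r = r' \<and> i = i') \<or> (r = r' \<and> a = a') \<or> (r = r' \<and> b = b') \<or> (i = i' \<and> a = a')
     \<or> (i = i' \<and> b = b') \<or> (a = a' \<and> b = b')"
  using assms by (elim disjE) auto

definition blk :: "nat \<Rightarrow> nat \<Rightarrow> (nat \<Rightarrow> nat \<Rightarrow> nat) \<Rightarrow> (nat \<Rightarrow> nat \<Rightarrow> nat) \<Rightarrow> nat \<Rightarrow> nat \<Rightarrow> nat set" where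
  "blk p n L1 L2 r i = {r, p + i, p + n + L1 r i, p + 2*n + L2 r i}"

theorem theorem2p4:
  fixes n \<rho> :: nat and L1 L2 :: "nat \<Rightarrow> nat \<Rightarrow> nat" and T :: "(nat \<times> nat) set"
  assumes "n \<ge> 1"
    and "MOLS2 n L1 L2"
    and "transversal n L1 T" and "transversal n L2 T"
    and "1 \<le> \<rho>" and "\<rho> \<le> n"
  shows "\<exists>(X :: nat set) B. card X = 3 * n + \<rho> \<and> packing X 4 B \<and>
           card B = n * \<rho> + D \<rho> 4 \<and> largest_PPC_size B \<rho>"
proof -
  obtain B0 where B0: "packing ({0..<\<rho>}::nat set) 4 B0" "card B0 = D \<rho> 4"
    using D_attained by blast
  have B0sub: "\<And>b. b \<in> B0 \<Longrightarrow> b \<subseteq> {0..<\<rho>} \<and> card b = 4" using B0(1) unfolding packing_def by auto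
  have finB0: "finite B0"
    by (rule finite_subset[of _ "Pow {0..<\<rho>}"]) (use B0sub in auto)
  have L1r: "\<And>i j. i < n \<Longrightarrow> j < n \<Longrightarrow> L1 i j < n"
   and L2r: "\<And>i j. i < n \<Longrightarrow> j < n \<Longrightarrow> L2 i j < n"
    using assms(2) unfolding MOLS2_def latin_square_def by auto
  have L1row: "\<And>i j j'. i < n \<Longrightarrow> j < n \<Longrightarrow> j' < n \<Longrightarrow> L1 i j = L1 i j' \<Longrightarrow> j = j'"
   and L2row: "\<And>i j j'. i < n \<Longrightarrow> j < n \<Longrightarrow> j' < n \<Longrightarrow> L2 i j = L2 i j' \<Longrightarrow> j = j'"
   and L1col: "\<And>i i' j. i < n \<Longrightarrow> i' < n \<Longrightarrow> j < n \<Longrightarrow> L1 i j = L1 i' j \<Longrightarrow> i = i'"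
   and L2col: "\<And>i i' j. i < n \<Longrightarrow> i' < n \<Longrightarrow> j < n \<Longrightarrow> L2 i j = L2 i' j \<Longrightarrow> i = i'"
  proof -
    have LS: "latin_square n L1" "latin_square n L2" using assms(2) unfolding MOLS2_def by auto
    have r1: "\<And>i. i < n \<Longrightarrow> inj_on (\<lambda>j. L1 i j) {0..<n}" and r2: "\<And>i. i < n \<Longrightarrow> inj_on (\<lambda>j. L2 i j) {0..<n}"
     and c1: "\<And>j. j < n \<Longrightarrow> inj_on (\<lambda>i. L1 i j) {0..<n}" and c2: "\<And>j. j < n \<Longrightarrow> inj_on (\<lambda>i. L2 i j) {0..<n}"
      using LS unfolding latin_square_def by blast+
    show "\<And>i j j'. i < n \<Longrightarrow> j < n \<Longrightarrow> j' < n \<Longrightarrow> L1 i j = L1 i j' \<Longrightarrow> j = j'"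
      using r1 by (metis atLeastLessThan_iff inj_onD zero_le)
    show "\<And>i j j'. i < n \<Longrightarrow> j < n \<Longrightarrow> j' < n \<Longrightarrow> L2 i j = L2 i j' \<Longrightarrow> j = j'"
      using r2 by (metis atLeastLessThan_iff inj_onD zero_le)
    show "\<And>i i' j. i < n \<Longrightarrow> i' < n \<Longrightarrow> j < n \<Longrightarrow> L1 i j = L1 i' j \<Longrightarrow> i = i'"
      using c1 by (metis atLeastLessThan_iff inj_onD zero_le)
    show "\<And>i i' j. i < n \<Longrightarrow> i' < n \<Longrightarrow> j < n \<Longrightarrow> L2 i j = L2 i' j \<Longrightarrow> i = i'"
      using c2 by (metis atLeastLessThan_iff inj_onD zero_le)
  qed
  have orth: "\<And>i j i' j'. i < n \<Longrightarrow> j < n \<Longrightarrow> i' < n \<Longrightarrow> j' < n \<Longrightarrow> L1 i j = L1 i' j' \<Longrightarrow> L2 i j = L2 i' j' \<Longrightarrow> i = i' \<and> j = j'"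
  proof -
    fix i j i' j' assume h: "i < n" "j < n" "i' < n" "j' < n" "L1 i j = L1 i' j'" "L2 i j = L2 i' j'"
    have inj: "inj_on (\<lambda>(i, j). (L1 i j, L2 i j)) ({0..<n} \<times> {0..<n})"
      using assms(2) unfolding MOLS2_def orthogonal_ls_def by blast
    have "(i, j) = (i', j')" by (rule inj_onD[OF inj]) (use h in auto)
    thus "i = i' \<and> j = j'" by simp
  qed
  define bl where "bl = blk \<rho> n L1 L2"
  have mem: "\<And>x r i. r < \<rho> \<Longrightarrow> i < n \<Longrightarrow> x \<in> bl r i \<longleftrightarrow>
      (x < \<rho> \<and> x = r) \<or> (\<rho> \<le> x \<and> x < \<rho> + n \<and> x = \<rho> + i) \<or>
      (\<rho> + n \<le> x \<and> x < \<rho> + 2*n \<and> x = \<rho> + n + L1 r i) \<or>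
      (\<rho> + 2*n \<le> x \<and> x = \<rho> + 2*n + L2 r i)"
  proof -
    fix x r i assume "r < \<rho>" "i < n"
    hence "L1 r i < n" "L2 r i < n" using L1r L2r assms(6) by auto
    thus "x \<in> bl r i \<longleftrightarrow>
      (x < \<rho> \<and> x = r) \<or> (\<rho> \<le> x \<and> x < \<rho> + n \<and> x = \<rho> + i) \<or>
      (\<rho> + n \<le> x \<and> x < \<rho> + 2*n \<and> x = \<rho> + n + L1 r i) \<or>
      (\<rho> + 2*n \<le> x \<and> x = \<rho> + 2*n + L2 r i)" using \<open>r < \<rho>\<close> \<open>i < n\<close> unfolding bl_def blk_def by auto
  qed
  define B1 where "B1 = (\<lambda>(r,i). bl r i) ` ({0..<\<rho>} \<times> {0..<n})"
  define B where "B = B0 \<union> B1"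
  define X where "X = {0..<3*n+\<rho>}"
  have same: "r = r' \<and> i = i'" if "r < \<rho>" "i < n" "r' < \<rho>" "i' < n" "x \<noteq> y"
      "x \<in> bl r i" "y \<in> bl r i" "x \<in> bl r' i'" "y \<in> bl r' i'" for r i r' i' x y
  proof -
    have rn: "r < n" "r' < n" using that assms(6) by auto
    note hx = cls[OF mem[OF that(1,2), THEN iffD1, OF that(6)] mem[OF that(3,4), THEN iffD1, OF that(8)]]
    note hy = cls[OF mem[OF that(1,2), THEN iffD1, OF that(7)] mem[OF that(3,4), THEN iffD1, OF that(9)]]
    from pair[OF hx hy that(5)] show ?thesis
    proof (elim disjE conjE)
      assume "r = r'" "i = i'" thus ?thesis by simp
    next
      assume "r = r'" "L1 r i = L1 r' i'" thus ?thesis using L1row[OF rn(1) that(2) that(4)] by simp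
    next
      assume "r = r'" "L2 r i = L2 r' i'" thus ?thesis using L2row[OF rn(1) that(2) that(4)] by simp
    next
      assume "i = i'" "L1 r i = L1 r' i'" thus ?thesis using L1col[OF rn that(2)] by simp
    next
      assume "i = i'" "L2 r i = L2 r' i'" thus ?thesis using L2col[OF rn that(2)] by simp
    next
      assume "L1 r i = L1 r' i'" "L2 r i = L2 r' i'" thus ?thesis using orth[OF rn(1) that(2) rn(2) that(4)] by simp
    qed
  qed
  have pack: "packing X 4 B"
    unfolding packing_def
  proof (intro conjI)
    show "finite X" unfolding X_def by simp
  next
   show "\<forall>b\<in>B. b \<subseteq> X \<and> card b = 4"
   proof
    fix b assume "b \<in> B"
    then have "b \<in> B0 \<or> b \<in> B1" unfolding B_def by auto
    then show "b \<subseteq> X \<and> card b = 4"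
    proof
      assume "b \<in> B0" thus ?thesis using B0sub[of b] unfolding X_def by force
    next
      assume "b \<in> B1"
      then obtain r i where ri: "r < \<rho>" "i < n" "b = bl r i" unfolding B1_def by auto
      hence "L1 r i < n" "L2 r i < n" using L1r L2r assms(6) by auto
      thus ?thesis using ri unfolding X_def bl_def blk_def by auto
    qed
   qed
  next
   show "\<forall>x y. x \<noteq> y \<longrightarrow> card {b \<in> B. x \<in> b \<and> y \<in> b} \<le> 1"
   proof (intro allI impI)
    fix x y :: nat assume "x \<noteq> y"
    have "\<forall>b\<in>{b \<in> B. x \<in> b \<and> y \<in> b}. \<forall>c\<in>{b \<in> B. x \<in> b \<and> y \<in> b}. b = c"
    proof (intro ballI)
      fix b c assume b: "b \<in> {b \<in> B. x \<in> b \<and> y \<in> b}" and c: "c \<in> {b \<in> B. x \<in> b \<and> y \<in> b}"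
      have ones: "\<And>r i. r < \<rho> \<Longrightarrow> i < n \<Longrightarrow> bl r i \<inter> {0..<\<rho>} = {r}"
        using mem by auto
      show "b = c"
      proof (cases "b \<in> B0")
        case bB0: True
        show ?thesis
        proof (cases "c \<in> B0")
          case True
          have "card {b \<in> B0. x \<in> b \<and> y \<in> b} \<le> 1" using B0(1) \<open>x \<noteq> y\<close> unfolding packing_def by auto
          moreover have "finite {b \<in> B0. x \<in> b \<and> y \<in> b}" using finB0 by auto
          ultimately show ?thesis using b c bB0 True by (auto simp: card_le_Suc0_iff_eq)
        next
          case False
          then obtain r i where ri: "r < \<rho>" "i < n" "c = bl r i" using c unfolding B_def B1_def by auto
          have "x \<in> bl r i \<inter> {0..<\<rho>}" "y \<in> bl r i \<inter> {0..<\<rho>}" using ri b c B0sub[OF bB0] by auto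
          hence "x = r" "y = r" using ones[OF ri(1,2)] by auto
          then show ?thesis using \<open>x \<noteq> y\<close> by simp
        qed
      next
        case bB1: False
        then obtain r i where ri: "r < \<rho>" "i < n" "b = bl r i" using b unfolding B_def B1_def by auto
        show ?thesis
        proof (cases "c \<in> B0")
          case True
          have "x \<in> bl r i \<inter> {0..<\<rho>}" "y \<in> bl r i \<inter> {0..<\<rho>}" using ri b c B0sub[OF True] by auto
          hence "x = r" "y = r" using ones[OF ri(1,2)] by auto
          then show ?thesis using \<open>x \<noteq> y\<close> by simp
        next
          case False
          then obtain r' i' where "r' < \<rho>" "i' < n" "c = bl r' i'" using c unfolding B_def B1_def by auto
          then show ?thesis using same[of r i r' i' x y] ri b c \<open>x \<noteq> y\<close> by auto
        qed
      qed
    qed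
    moreover have "finite B" unfolding B_def B1_def using finB0 by auto
    ultimately show "card {b \<in> B. x \<in> b \<and> y \<in> b} \<le> 1" by (auto simp: card_le_Suc0_iff_eq)
   qed
  qed
  have injbl: "inj_on (\<lambda>(r,i). bl r i) ({0..<\<rho>} \<times> {0..<n})"
  proof (rule inj_onI, clarify)
    fix r i r' i' assume h: "r \<in> {0..<\<rho>}" "i \<in> {0..<n}" "r' \<in> {0..<\<rho>}" "i' \<in> {0..<n}" "bl r i = bl r' i'"
    have "r \<in> bl r' i'" using h(5) unfolding bl_def blk_def by auto
    hence "r = r'" using mem[of r' i' r] h by auto
    have "\<rho> + i \<in> bl r' i'" using h(5) unfolding bl_def blk_def by auto
    hence "i = i'" using mem[of r' i' "\<rho>+i"] h by auto
    thus "r = r' \<and> i = i'" using \<open>r = r'\<close> by simp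
  qed
  have cardB1: "card B1 = n * \<rho>" unfolding B1_def using card_image[OF injbl] by simp
  have disj: "B0 \<inter> B1 = {}"
  proof -
    { fix b assume "b \<in> B0" "b \<in> B1"
      then obtain r i where "r < \<rho>" "i < n" "b = bl r i" unfolding B1_def by auto
      hence "\<rho> + i \<in> b" unfolding bl_def blk_def by auto
      hence False using B0sub[OF \<open>b \<in> B0\<close>] by auto }
    thus ?thesis by blast
  qed
  have cardB: "card B = n * \<rho> + D \<rho> 4"
    unfolding B_def using card_Un_disjoint[OF finB0 _ disj] cardB1 B0(2) unfolding B1_def by auto
  have T1: "transversal n L1 T" and T2: "transversal n L2 T" using assms by auto
  have Tsub: "T \<subseteq> {0..<n} \<times> {0..<n}" and cardT: "card T = n"
    and Trow: "\<forall>i<n. \<exists>!j. (i, j) \<in> T" and Tcol: "\<forall>j<n. \<exists>!i. (i, j) \<in> T"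
    using T1 unfolding transversal_def by auto
  have finT: "finite T" using Tsub finite_subset by blast
  have inj1: "inj_on (\<lambda>(i, j). L1 i j) T"
    using T1 cardT finT unfolding transversal_def by (simp add: eq_card_imp_inj_on)
  have inj2: "inj_on (\<lambda>(i, j). L2 i j) T"
    using T2 cardT finT unfolding transversal_def by (simp add: eq_card_imp_inj_on)
  define t where "t r = (THE j. (r, j) \<in> T)" for r
  have tT: "\<And>r. r < n \<Longrightarrow> (r, t r) \<in> T"
    unfolding t_def using Trow by (metis theI')
  have tn: "\<And>r. r < n \<Longrightarrow> t r < n" using tT Tsub by (meson SigmaD2 atLeastLessThan_iff subsetD)
  define P where "P = (\<lambda>r. bl r (t r)) ` {0..<\<rho>}"
  have PB: "P \<subseteq> B"
  proof
    fix b assume "b \<in> P"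
    then obtain r where r: "r < \<rho>" "b = bl r (t r)" unfolding P_def by auto
    have "t r < n" using tn r assms(6) by auto
    hence rt: "(r, t r) \<in> {0..<\<rho>} \<times> {0..<n}" using r by simp
    have "b = (\<lambda>(r,i). bl r i) (r, t r)" using r by simp
    hence "b \<in> B1" unfolding B1_def using rt by (rule image_eqI)
    thus "b \<in> B" unfolding B_def by simp
  qed
  have injP: "inj_on (\<lambda>r. bl r (t r)) {0..<\<rho>}"
  proof (rule inj_onI)
    fix r r' assume h: "r \<in> {0..<\<rho>}" "r' \<in> {0..<\<rho>}" "bl r (t r) = bl r' (t r')"
    have "(r, t r) \<in> {0..<\<rho>} \<times> {0..<n}" "(r', t r') \<in> {0..<\<rho>} \<times> {0..<n}"
      using h tn assms(6) by auto
    from inj_onD[OF injbl _ this] h(3) show "r = r'" by simp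
  qed
  have cardP: "card P = \<rho>" unfolding P_def using card_image[OF injP] by simp
  have PPCP: "PPC B P" unfolding PPC_def
  proof (intro conjI PB ballI impI)
    fix b c assume "b \<in> P" "c \<in> P" "b \<noteq> c"
    obtain r where r1: "r < \<rho>" "b = bl r (t r)" using \<open>b \<in> P\<close> unfolding P_def by auto
    obtain r' where r2: "r' < \<rho>" "c = bl r' (t r')" using \<open>c \<in> P\<close> unfolding P_def by auto
    have "r \<noteq> r'" using r1 r2 \<open>b \<noteq> c\<close> by auto
    note rr = r1(1) r2(1) r1(2) r2(2) this
    have rn: "r < n" "r' < n" using rr assms(6) by auto
    have T12: "(r, t r) \<in> T" "(r', t r') \<in> T" using tT rn by auto
    have ne: "(r, t r) \<noteq> (r', t r')" using rr by auto
    have "t r \<noteq> t r'"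
    proof
      assume eq: "t r = t r'"
      have "\<exists>!i. (i, t r) \<in> T" using Tcol tn rn by auto
      thus False using T12 eq rr(5) by metis
    qed
    moreover have "L1 r (t r) \<noteq> L1 r' (t r')"
    proof
      assume "L1 r (t r) = L1 r' (t r')"
      hence "(r, t r) = (r', t r')" using inj_onD[OF inj1 _ T12] by simp
      thus False using ne by simp
    qed
    moreover have "L2 r (t r) \<noteq> L2 r' (t r')"
    proof
      assume "L2 r (t r) = L2 r' (t r')"
      hence "(r, t r) = (r', t r')" using inj_onD[OF inj2 _ T12] by simp
      thus False using ne by simp
    qed
    moreover have "L1 r (t r) < n" "L1 r' (t r') < n" "L2 r (t r) < n" "L2 r' (t r') < n"
      using L1r L2r rn tn by auto
    ultimately show "b \<inter> c = {}" using rr(1-4) rr(5) tn[OF rn(1)] tn[OF rn(2)] unfolding bl_def blk_def by simp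
  qed
  have noP: "\<not> (\<exists>Q. PPC B Q \<and> card Q = \<rho> + 1)"
  proof
    assume "\<exists>Q. PPC B Q \<and> card Q = \<rho> + 1"
    then obtain Q where Q: "PPC B Q" "card Q = \<rho> + 1" by blast
    have meet: "\<And>b. b \<in> B \<Longrightarrow> b \<inter> {0..<\<rho>} \<noteq> {}"
    proof -
      fix b assume "b \<in> B"
      then have "b \<in> B0 \<or> b \<in> B1" unfolding B_def by auto
      thus "b \<inter> {0..<\<rho>} \<noteq> {}"
      proof
        assume "b \<in> B0"
        hence "b \<subseteq> {0..<\<rho>}" "card b = 4" using B0sub by auto
        hence "b \<inter> {0..<\<rho>} = b" "b \<noteq> {}" by auto
        thus ?thesis by simp
      next
        assume "b \<in> B1"
        then obtain r i where "r < \<rho>" "i < n" "b = bl r i" unfolding B1_def by auto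
        thus ?thesis unfolding bl_def blk_def by auto
      qed
    qed
    define f where "f b = (SOME x. x \<in> b \<inter> {0..<\<rho>})" for b :: "nat set"
    have QB: "Q \<subseteq> B" and Qd: "\<And>b c. b \<in> Q \<Longrightarrow> c \<in> Q \<Longrightarrow> b \<noteq> c \<Longrightarrow> b \<inter> c = {}"
      using Q(1) unfolding PPC_def by auto
    have fin: "f b \<in> b \<inter> {0..<\<rho>}" if "b \<in> Q" for b
    proof -
      have "b \<inter> {0..<\<rho>} \<noteq> {}" using meet QB that by auto
      hence "\<exists>x. x \<in> b \<inter> {0..<\<rho>}" by blast
      thus ?thesis unfolding f_def by (rule someI_ex)
    qed
    have "inj_on f Q"
    proof (rule inj_onI)
      fix b c assume "b \<in> Q" "c \<in> Q" "f b = f c"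
      show "b = c"
      proof (rule ccontr)
        assume "b \<noteq> c"
        hence "b \<inter> c = {}" using Qd \<open>b \<in> Q\<close> \<open>c \<in> Q\<close> by auto
        moreover have "f b \<in> b" "f b \<in> c" using fin[OF \<open>b \<in> Q\<close>] fin[OF \<open>c \<in> Q\<close>] \<open>f b = f c\<close> by auto
        ultimately show False by blast
      qed
    qed
    hence "card Q \<le> card {0..<\<rho>}" by (rule card_inj_on_le) (use fin in auto)
    thus False using Q(2) by simp
  qed
  have "card X = 3 * n + \<rho>" unfolding X_def by simp
  thus ?thesis using pack cardB PPCP cardP noP unfolding largest_PPC_size_def by blast
qed

end
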